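(* Let $\mathbf{F}$ be a regular $1$-independent normed space of functions over a set $X$, let $\omega_1,\dots,\omega_n\in Mult(\mathbf{F})$ and $\vec\omega=(\omega_1,\dots,\omega_n):X\to\mathbb{C}^n$. Let $Y\subset\mathbb{C}^n$ be a bounded domain such that the polynomials are dense in $A(Y)$ with respect to $\sup_{\overline Y}|\cdot|$, and the closure of the open unit ball of the polynomials (sup norm on $Y$) in the topology of pointwise convergence on $Y$ equals the closed unit ball of $H_\infty(Y)$. Assume $\vec\omega(X)\subset\overline{Y}$, and that $C_{\vec\omega}:p\mapsto p\circ\vec\omega$ maps the polynomials into $Mult(\mathbf{F})$ and is bounded with respect to the norm $\sup_{\overline{Y}}|p|$. Then: (i) $C_{\vec\omega}$ maps $A(Y)$ (its elements viewed as continuous functions on $\overline Y$) boundedly into $Mult(\mathbf{F})$; (ii) if additionally $\vec\omega(X)\subset Y$, then $C_{\vec\omega}$ maps $H_\infty(Y)$ boundedly into $Mult(\mathbf{F})$.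
   Context: A normed space of functions over a set $X$ is a linear subspace of the space of all functions $X\to\mathbb{C}$ with a norm for which point evaluations are bounded; it is $1$-independent if for each $x$ some $f\in\mathbf{F}$ has $f(x)\ne0$, and regular if its closed unit ball is closed in the topology of pointwise convergence on $X$. $Mult(\mathbf{F})$ is the set of $\omega:X\to\mathbb{C}$ with $\omega f\in\mathbf{F}$ for all $f\in\mathbf{F}$ and $f\mapsto\omega f$ bounded, normed by the operator norm. $H_\infty(Y)$ is the space of bounded holomorphic functions on $Y$ with the sup norm; $A(Y)$ is its closed subspace of functions extending continuously to $\overline Y$. *)

theory Defs
  imports "HOL-Analysis.Analysis"
begin

text \<open>Functions on a set X are represented as functions on the ambient type that vanish
outside X (extensional convention). The topology of pointwise convergence is then the
product topology on type 'a \<Rightarrow> complex restricted to this closed set.\<close>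

definition ext_on :: "'a set \<Rightarrow> ('a \<Rightarrow> complex) set" where
  "ext_on X = {f. \<forall>x. x \<notin> X \<longrightarrow> f x = 0}"

definition normed_fun_space :: "'a set \<Rightarrow> ('a \<Rightarrow> complex) set \<Rightarrow> (('a \<Rightarrow> complex) \<Rightarrow> real) \<Rightarrow> bool" where
  "normed_fun_space X F N \<longleftrightarrow>
     F \<subseteq> ext_on X \<and>
     (\<lambda>x. 0) \<in> F \<and>
     (\<forall>f\<in>F. \<forall>g\<in>F. (\<lambda>x. f x + g x) \<in> F) \<and>
     (\<forall>c. \<forall>f\<in>F. (\<lambda>x. c * f x) \<in> F) \<and>
     (\<forall>f\<in>F. 0 \<le> N f) \<and>
     (\<forall>f\<in>F. N f = 0 \<longleftrightarrow> f = (\<lambda>x. 0)) \<and>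
     (\<forall>c. \<forall>f\<in>F. N (\<lambda>x. c * f x) = cmod c * N f) \<and>
     (\<forall>f\<in>F. \<forall>g\<in>F. N (\<lambda>x. f x + g x) \<le> N f + N g) \<and>
     (\<forall>x\<in>X. \<exists>C. \<forall>f\<in>F. cmod (f x) \<le> C * N f)"

definition one_independent :: "'a set \<Rightarrow> ('a \<Rightarrow> complex) set \<Rightarrow> bool" where
  "one_independent X F \<longleftrightarrow> (\<forall>x\<in>X. \<exists>f\<in>F. f x \<noteq> 0)"

definition regular_fun_space :: "('a \<Rightarrow> complex) set \<Rightarrow> (('a \<Rightarrow> complex) \<Rightarrow> real) \<Rightarrow> bool" where
  "regular_fun_space F N \<longleftrightarrow> closed {f \<in> F. N f \<le> 1}"

definition Mult :: "('a \<Rightarrow> complex) set \<Rightarrow> (('a \<Rightarrow> complex) \<Rightarrow> real) \<Rightarrow> ('a \<Rightarrow> complex) set" where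
  "Mult F N = {w. (\<forall>f\<in>F. (\<lambda>x. w x * f x) \<in> F) \<and>
                  (\<exists>C. \<forall>f\<in>F. N (\<lambda>x. w x * f x) \<le> C * N f)}"

definition mult_norm :: "('a \<Rightarrow> complex) set \<Rightarrow> (('a \<Rightarrow> complex) \<Rightarrow> real) \<Rightarrow> ('a \<Rightarrow> complex) \<Rightarrow> real" where
  "mult_norm F N w = Inf {C. 0 \<le> C \<and> (\<forall>f\<in>F. N (\<lambda>x. w x * f x) \<le> C * N f)}"

definition polynomial_fun :: "(complex ^ 'n \<Rightarrow> complex) \<Rightarrow> bool" where
  "polynomial_fun p \<longleftrightarrow> (\<exists>S :: ('n \<Rightarrow> nat) set. \<exists>c. finite S \<and>
      p = (\<lambda>z. \<Sum>\<alpha>\<in>S. c \<alpha> * (\<Prod>i\<in>UNIV. (z $ i) ^ \<alpha> i)))"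

definition holomorphic_n :: "(complex ^ 'n \<Rightarrow> complex) \<Rightarrow> (complex ^ 'n) set \<Rightarrow> bool" where
  "holomorphic_n f Y \<longleftrightarrow> (\<forall>z\<in>Y. \<exists>L. (f has_derivative L) (at z) \<and>
      (\<forall>c v. L (c *s v) = c * L v))"

definition domain_n :: "(complex ^ 'n) set \<Rightarrow> bool" where
  "domain_n Y \<longleftrightarrow> open Y \<and> connected Y \<and> Y \<noteq> {}"

definition sup_on :: "'b set \<Rightarrow> ('b \<Rightarrow> complex) \<Rightarrow> real" where
  "sup_on S f = (SUP z\<in>S. cmod (f z))"

definition restrict0 :: "'b set \<Rightarrow> ('b \<Rightarrow> complex) \<Rightarrow> ('b \<Rightarrow> complex)" where
  "restrict0 S f = (\<lambda>z. if z \<in> S then f z else 0)"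

definition H_inf :: "(complex ^ 'n) set \<Rightarrow> (complex ^ 'n \<Rightarrow> complex) set" where
  "H_inf Y = {f. f \<in> ext_on Y \<and> holomorphic_n f Y \<and> bounded (f ` Y)}"

end

theory Submission
  imports Defs
begin

lemma nfsD:
  assumes "normed_fun_space X F N"
  shows "F \<subseteq> ext_on X" "(\<lambda>x. 0) \<in> F"
    "\<And>f g. f\<in>F \<Longrightarrow> g\<in>F \<Longrightarrow> (\<lambda>x. f x + g x) \<in> F"
    "\<And>c f. f\<in>F \<Longrightarrow> (\<lambda>x. c * f x) \<in> F"
    "\<And>f. f\<in>F \<Longrightarrow> 0 \<le> N f"
    "\<And>f. f\<in>F \<Longrightarrow> N f = 0 \<longleftrightarrow> f = (\<lambda>x. 0)"
    "\<And>c f. f\<in>F \<Longrightarrow> N (\<lambda>x. c * f x) = cmod c * N f"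
  using assms unfolding normed_fun_space_def by blast+

lemma tendsto_fun_pointwise:
  fixes f :: "'i \<Rightarrow> 'b \<Rightarrow> 'c::topological_space"
  assumes "\<And>x. ((\<lambda>k. f k x) \<longlongrightarrow> l x) G"
  shows "(f \<longlongrightarrow> l) G"
proof -
  have "limitin (product_topology (\<lambda>i. euclidean) UNIV) f l G"
    using assms by (simp add: limitin_componentwise)
  then show ?thesis by (simp add: euclidean_product_topology)
qed

lemma mult_le:
  assumes nfs: "normed_fun_space X F N" and wm: "v \<in> Mult F N" and g: "g \<in> F"
  shows "N (\<lambda>x. v x * g x) \<le> mult_norm F N v * N g"
proof -
  define A where "A = {C. 0 \<le> C \<and> (\<forall>f\<in>F. N (\<lambda>x. v x * f x) \<le> C * N f)}"
  obtain C0 where C0: "\<forall>f\<in>F. N (\<lambda>x. v x * f x) \<le> C0 * N f" using wm unfolding Mult_def by blast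
  have "max C0 0 \<in> A" unfolding A_def
  proof safe
    fix f assume "f \<in> F"
    then have "C0 * N f \<le> max C0 0 * N f" using nfsD(5)[OF nfs] by (simp add: mult_right_mono)
    then show "N (\<lambda>x. v x * f x) \<le> max C0 0 * N f" using C0 \<open>f\<in>F\<close> by force
  qed simp
  then have ne: "A \<noteq> {}" by blast
  have bdd: "bdd_below A" unfolding A_def by (rule bdd_belowI[of _ 0]) auto
  show ?thesis
  proof (cases "N g = 0")
    case True
    then have "g = (\<lambda>x. 0)" using nfsD(6)[OF nfs g] by simp
    then show ?thesis using nfsD(6)[OF nfs nfsD(2)[OF nfs]] by simp
  next
    case False
    then have pos: "N g > 0" using nfsD(5)[OF nfs g] by simp
    have "N (\<lambda>x. v x * g x) / N g \<le> Inf A"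
    proof (rule cInf_greatest[OF ne])
      fix c assume "c \<in> A"
      then have "N (\<lambda>x. v x * g x) \<le> c * N g" using g unfolding A_def by blast
      then show "N (\<lambda>x. v x * g x) / N g \<le> c" using pos by (simp add: pos_divide_le_eq)
    qed
    then show ?thesis using pos unfolding mult_norm_def A_def[symmetric] by (simp add: pos_divide_le_eq)
  qed
qed

lemma mult_norm_le:
  assumes "\<forall>g\<in>F. N (\<lambda>x. v x * g x) \<le> K * N g" "0 \<le> K"
  shows "mult_norm F N v \<le> K"
  unfolding mult_norm_def
proof (rule cInf_lower)
  show "K \<in> {C. 0 \<le> C \<and> (\<forall>f\<in>F. N (\<lambda>x. v x * f x) \<le> C * N f)}" using assms by simp
  show "bdd_below {C. 0 \<le> C \<and> (\<forall>f\<in>F. N (\<lambda>x. v x * f x) \<le> C * N f)}"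
    by (rule bdd_belowI[of _ 0]) auto
qed

lemma closed_ball_F:
  assumes nfs: "normed_fun_space X F N" and reg: "regular_fun_space F N" and r: "r > 0"
  shows "closed {k\<in>F. N k \<le> r}"
proof -
  have eq: "{k\<in>F. N k \<le> r} = (\<lambda>k. \<lambda>x. complex_of_real (1/r) * k x) -` {f \<in> F. N f \<le> 1}"
  proof (rule set_eqI, rule iffI)
    fix k assume "k \<in> {k\<in>F. N k \<le> r}"
    then have k: "k \<in> F" "N k \<le> r" by auto
    have "(\<lambda>x. complex_of_real (1/r) * k x) \<in> F" using nfsD(4)[OF nfs k(1)] by blast
    moreover have "N (\<lambda>x. complex_of_real (1/r) * k x) = (1/r) * N k"
      using nfsD(7)[OF nfs k(1), of "complex_of_real (1/r)"] r by (simp only: norm_of_real) simp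
    then have "N (\<lambda>x. complex_of_real (1/r) * k x) \<le> 1"
      using k(2) r by (simp add: divide_le_eq)
    ultimately show "k \<in> (\<lambda>k. \<lambda>x. complex_of_real (1/r) * k x) -` {f \<in> F. N f \<le> 1}" by simp
  next
    fix k assume "k \<in> (\<lambda>k. \<lambda>x. complex_of_real (1/r) * k x) -` {f \<in> F. N f \<le> 1}"
    then have a: "(\<lambda>x. complex_of_real (1/r) * k x) \<in> F" "N (\<lambda>x. complex_of_real (1/r) * k x) \<le> 1"
      by auto
    have keq: "k = (\<lambda>x. complex_of_real r * ((\<lambda>x. complex_of_real (1/r) * k x) x))"
      using r by auto
    have kF: "k \<in> F" by (subst keq, rule nfsD(4)[OF nfs a(1)])
    have "N k = r * N (\<lambda>x. complex_of_real (1/r) * k x)"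
      by (subst keq, subst nfsD(7)[OF nfs a(1)]) (use r in simp)
    then have "N k \<le> r" using a(2) r by (simp add: mult_le_cancel_left1)
    then show "k \<in> {k\<in>F. N k \<le> r}" using kF by simp
  qed
  show ?thesis unfolding eq
    by (rule closed_vimage) (use reg r in \<open>auto simp: regular_fun_space_def intro!: continuous_intros\<close>)
qed

lemma sup_on_upper:
  assumes "bounded (g ` K)" "z \<in> K"
  shows "cmod (g z) \<le> sup_on K g"
proof -
  obtain B where "\<forall>x\<in>g ` K. norm x \<le> B" using assms(1) bounded_iff by blast
  then have "bdd_above ((\<lambda>z. cmod (g z)) ` K)" by (auto intro: bdd_aboveI2)
  then show ?thesis unfolding sup_on_def using assms(2) by (rule cSUP_upper2) simp
qed

lemma sup_on_least:
  assumes "K \<noteq> {}" "\<And>z. z \<in> K \<Longrightarrow> cmod (g z) \<le> M"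
  shows "sup_on K g \<le> M"
  unfolding sup_on_def using assms by (rule cSUP_least)

lemma poly_cont:
  assumes "polynomial_fun p" shows "continuous_on UNIV p"
proof -
  obtain S c where "p = (\<lambda>z. \<Sum>\<alpha>\<in>S. c \<alpha> * (\<Prod>i\<in>UNIV. (z $ i) ^ \<alpha> i))"
    using assms unfolding polynomial_fun_def by blast
  then show ?thesis by (auto intro!: continuous_intros)
qed


theorem proposition5p7:
  fixes X :: "'a set" and F :: "('a \<Rightarrow> complex) set" and N :: "('a \<Rightarrow> complex) \<Rightarrow> real"
    and w :: "'a \<Rightarrow> complex ^ 'n" and Y :: "(complex ^ 'n) set"
  assumes nfs: "normed_fun_space X F N"
    and indep: "one_independent X F"
    and reg: "regular_fun_space F N"
    and w_mult: "\<forall>i. (\<lambda>x. w x $ i) \<in> Mult F N"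
    and Y_dom: "domain_n Y" and Y_bdd: "bounded Y"
    and dense: "\<forall>f. continuous_on (closure Y) f \<and> holomorphic_n f Y \<longrightarrow>
                   (\<forall>\<epsilon>>0. \<exists>p. polynomial_fun p \<and> (\<forall>z\<in>closure Y. cmod (f z - p z) < \<epsilon>))"
    and ball: "closure {restrict0 Y p | p. polynomial_fun p \<and> sup_on Y p < 1}
                 = {f \<in> H_inf Y. sup_on Y f \<le> 1}"
    and w_range: "w ` X \<subseteq> closure Y"
    and C_poly: "\<forall>p. polynomial_fun p \<longrightarrow> (p \<circ> w) \<in> Mult F N"
    and C_bdd: "\<exists>C. \<forall>p. polynomial_fun p \<longrightarrow> mult_norm F N (p \<circ> w) \<le> C * sup_on (closure Y) p"
  shows "(\<exists>C. \<forall>f. continuous_on (closure Y) f \<and> holomorphic_n f Y \<longrightarrow>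
            (f \<circ> w) \<in> Mult F N \<and> mult_norm F N (f \<circ> w) \<le> C * sup_on (closure Y) f)
       \<and> (w ` X \<subseteq> Y \<longrightarrow>
            (\<exists>C. \<forall>f. holomorphic_n f Y \<and> bounded (f ` Y) \<longrightarrow>
              (f \<circ> w) \<in> Mult F N \<and> mult_norm F N (f \<circ> w) \<le> C * sup_on Y f))"
proof -
  note F = nfsD[OF nfs]
  obtain C0 where C0: "\<forall>p. polynomial_fun p \<longrightarrow> mult_norm F N (p \<circ> w) \<le> C0 * sup_on (closure Y) p"
    using C_bdd by blast
  define C where "C = max C0 0"
  have C0le: "C \<ge> 0" unfolding C_def by simp
  have Yne: "Y \<noteq> {}" and Yopen: "open Y" using Y_dom unfolding domain_n_def by auto
  have cYne: "closure Y \<noteq> {}" using Yne by simp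
  have cYc: "compact (closure Y)" using Y_bdd by (simp add: compact_closure)
  have Fext: "\<And>h x. h \<in> F \<Longrightarrow> x \<notin> X \<Longrightarrow> h x = 0" using F(1) unfolding ext_on_def by blast
  have N0: "N (\<lambda>x. 0) = 0" using F(6)[OF F(2)] by simp
  have pbd: "bounded (p ` closure Y)" if "polynomial_fun p" for p
    using poly_cont[OF that] cYc
    by (meson compact_continuous_image compact_imp_bounded continuous_on_subset subset_UNIV)
  have ppos: "0 \<le> sup_on (closure Y) p" if "polynomial_fun p" for p
  proof -
    obtain z where "z \<in> closure Y" using cYne by (meson ex_in_conv)
    then show ?thesis using sup_on_upper[OF pbd[OF that]] norm_ge_zero order_trans by blast
  qed
  have Cb: "mult_norm F N (p \<circ> w) \<le> C * sup_on (closure Y) p" if "polynomial_fun p" for p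
  proof -
    have "C0 * sup_on (closure Y) p \<le> C * sup_on (closure Y) p"
      unfolding C_def using ppos[OF that] by (simp add: mult_right_mono)
    then show ?thesis using C0 that by force
  qed
  have Pbound: "(\<lambda>x. (p \<circ> w) x * h x) \<in> F \<and> N (\<lambda>x. (p \<circ> w) x * h x) \<le> C * sup_on (closure Y) p * N h"
    if "polynomial_fun p" "h \<in> F" for p h
  proof
    have m: "p \<circ> w \<in> Mult F N" using C_poly that(1) by blast
    then show "(\<lambda>x. (p \<circ> w) x * h x) \<in> F" using that(2) unfolding Mult_def by blast
    have "N (\<lambda>x. (p \<circ> w) x * h x) \<le> mult_norm F N (p \<circ> w) * N h" by (rule mult_le[OF nfs m that(2)])
    also have "\<dots> \<le> C * sup_on (closure Y) p * N h"
      using Cb[OF that(1)] F(5)[OF that(2)] by (simp add: mult_right_mono)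
    finally show "N (\<lambda>x. (p \<circ> w) x * h x) \<le> C * sup_on (closure Y) p * N h" .
  qed
  have part1: "\<exists>C. \<forall>f. continuous_on (closure Y) f \<and> holomorphic_n f Y \<longrightarrow>
            (f \<circ> w) \<in> Mult F N \<and> mult_norm F N (f \<circ> w) \<le> C * sup_on (closure Y) f"
  proof (intro exI allI impI)
    fix f assume fa: "continuous_on (closure Y) f \<and> holomorphic_n f Y"
    define s where "s = sup_on (closure Y) f"
    have fbd: "bounded (f ` closure Y)" using fa cYc compact_continuous_image compact_imp_bounded by blast
    have s0: "s \<ge> 0"
    proof -
      obtain z where "z \<in> closure Y" using cYne by (meson ex_in_conv)
      then show ?thesis unfolding s_def using sup_on_upper[OF fbd] norm_ge_zero order_trans by blast
    qed
    have approx: "\<forall>e>0. \<exists>p. polynomial_fun p \<and> (\<forall>z\<in>closure Y. cmod (f z - p z) < e)"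
      using dense fa by blast
    have key: "(\<lambda>x. (f \<circ> w) x * h x) \<in> F \<and> N (\<lambda>x. (f \<circ> w) x * h x) \<le> C * s * N h"
      if h: "h \<in> F" for h
    proof -
      have Nh: "N h \<ge> 0" using F(5)[OF h] .
      have step: "(\<lambda>x. (f \<circ> w) x * h x) \<in> {k\<in>F. N k \<le> C * s * N h + d}" if d: "d > 0" for d
      proof -
        define eps where "eps = d / (C * N h + 1)"
        have CN: "C * N h \<ge> 0" using C0le Nh by simp
        have eps: "eps > 0" unfolding eps_def using d CN by simp
        have Ceps: "C * eps * N h \<le> d"
        proof -
          have "C * eps * N h = d * (C * N h / (C * N h + 1))" unfolding eps_def using CN by (simp add: field_simps)
          also have "\<dots> \<le> d * 1" using CN d by (intro mult_left_mono) auto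
          finally show ?thesis by simp
        qed
        have "\<forall>k. \<exists>p. polynomial_fun p \<and> (\<forall>z\<in>closure Y. cmod (f z - p z) < min eps (inverse (real (Suc k))))"
        proof
          fix k
          have "min eps (inverse (real (Suc k))) > 0" using eps by simp
          then show "\<exists>p. polynomial_fun p \<and> (\<forall>z\<in>closure Y. cmod (f z - p z) < min eps (inverse (real (Suc k))))"
            using approx by blast
        qed
        then obtain P where P: "\<And>k. polynomial_fun (P k)"
          "\<And>k z. z \<in> closure Y \<Longrightarrow> cmod (f z - P k z) < min eps (inverse (real (Suc k)))"
          by metis
        define hk where "hk = (\<lambda>k. \<lambda>x. (P k \<circ> w) x * h x)"
        have inB: "hk k \<in> {k\<in>F. N k \<le> C * s * N h + d}" for k
        proof -
          have sP: "sup_on (closure Y) (P k) \<le> s + eps"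
          proof (rule sup_on_least[OF cYne])
            fix z assume z: "z \<in> closure Y"
            have "cmod (P k z) \<le> cmod (f z) + cmod (f z - P k z)" using norm_triangle_sub[of "P k z" "f z"] by (simp add: norm_minus_commute)
            also have "\<dots> \<le> s + eps" using sup_on_upper[OF fbd z] P(2)[OF z, of k] unfolding s_def by simp
            finally show "cmod (P k z) \<le> s + eps" .
          qed
          have "N (hk k) \<le> C * sup_on (closure Y) (P k) * N h" using Pbound[OF P(1) h] unfolding hk_def by blast
          also have "\<dots> \<le> C * (s + eps) * N h" using sP C0le Nh by (intro mult_right_mono mult_left_mono) auto
          also have "\<dots> = C * s * N h + C * eps * N h" by (simp add: algebra_simps)
          also have "\<dots> \<le> C * s * N h + d" using Ceps by simp
          finally show ?thesis using Pbound[OF P(1) h] unfolding hk_def by blast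
        qed
        have lim: "hk \<longlonglongrightarrow> (\<lambda>x. (f \<circ> w) x * h x)"
        proof (rule tendsto_fun_pointwise)
          fix x
          show "(\<lambda>k. hk k x) \<longlonglongrightarrow> (f \<circ> w) x * h x"
          proof (cases "x \<in> X")
            case True
            then have wx: "w x \<in> closure Y" using w_range by blast
            have "(\<lambda>k. P k (w x) - f (w x)) \<longlonglongrightarrow> 0"
            proof (rule Lim_null_comparison[OF _ LIMSEQ_inverse_real_of_nat])
              show "\<forall>\<^sub>F k in sequentially. cmod (P k (w x) - f (w x)) \<le> inverse (real (Suc k))"
                using P(2)[OF wx] by (simp add: norm_minus_commute less_imp_le)
            qed
            then have "(\<lambda>k. P k (w x)) \<longlonglongrightarrow> f (w x)" by (rule LIM_zero_cancel)
            then show ?thesis unfolding hk_def by (auto intro: tendsto_mult_right)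
          next
            case False
            then show ?thesis unfolding hk_def using Fext[OF h False] by simp
          qed
        qed
        have pos: "C * s * N h + d > 0" using C0le s0 Nh d by (simp add: add_nonneg_pos)
        show ?thesis by (rule closed_sequentially[OF closed_ball_F[OF nfs reg pos] inB lim])
      qed
      have inF: "(\<lambda>x. (f \<circ> w) x * h x) \<in> F" using step[of 1] by simp
      have "N (\<lambda>x. (f \<circ> w) x * h x) \<le> C * s * N h"
        by (rule field_le_epsilon) (use step in auto)
      then show ?thesis using inF by simp
    qed
    have "f \<circ> w \<in> Mult F N" unfolding Mult_def using key by blast
    moreover have "mult_norm F N (f \<circ> w) \<le> C * s"
      by (rule mult_norm_le) (use key C0le s0 in auto)
    ultimately show "(f \<circ> w) \<in> Mult F N \<and> mult_norm F N (f \<circ> w) \<le> C * sup_on (closure Y) f"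
      unfolding s_def by simp
  qed
  have part2: "w ` X \<subseteq> Y \<longrightarrow>
            (\<exists>C. \<forall>f. holomorphic_n f Y \<and> bounded (f ` Y) \<longrightarrow>
              (f \<circ> w) \<in> Mult F N \<and> mult_norm F N (f \<circ> w) \<le> C * sup_on Y f)"
  proof (intro impI exI[of _ C] allI)
    assume wY: "w ` X \<subseteq> Y"
    fix f assume fa: "holomorphic_n f Y \<and> bounded (f ` Y)"
    define s where "s = sup_on Y f"
    have fbd: "bounded (f ` Y)" using fa by blast
    have s0: "s \<ge> 0"
    proof -
      obtain z where "z \<in> Y" using Yne by (meson ex_in_conv)
      then show ?thesis unfolding s_def using sup_on_upper[OF fbd] norm_ge_zero order_trans by blast
    qed
    have key: "(\<lambda>x. (f \<circ> w) x * h x) \<in> F \<and> N (\<lambda>x. (f \<circ> w) x * h x) \<le> C * s * N h"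
      if h: "h \<in> F" for h
    proof -
      have Nh: "N h \<ge> 0" using F(5)[OF h] .
      show ?thesis
      proof (cases "s = 0")
        case True
        have "(\<lambda>x. (f \<circ> w) x * h x) = (\<lambda>x. 0)"
        proof
          fix x show "(f \<circ> w) x * h x = 0"
          proof (cases "x \<in> X")
            case True
            then have "w x \<in> Y" using wY by blast
            then have "cmod (f (w x)) \<le> 0" using sup_on_upper[OF fbd] \<open>s = 0\<close> unfolding s_def by metis
            then show ?thesis by simp
          next
            case False then show ?thesis using Fext[OF h] by simp
          qed
        qed
        then show ?thesis using F(2) N0 True by simp
      next
        case False
        then have spos: "s > 0" using s0 by simp
        define c where "c = inverse (complex_of_real s)"
        define g where "g = restrict0 Y (\<lambda>z. f z * c)"
        define S where "S = {restrict0 Y p | p. polynomial_fun p \<and> sup_on Y p < 1}"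
        have gH: "g \<in> {f \<in> H_inf Y. sup_on Y f \<le> 1}"
        proof -
          have "g \<in> ext_on Y" unfolding g_def ext_on_def restrict0_def by simp
          moreover have "holomorphic_n g Y" unfolding holomorphic_n_def
          proof
            fix z assume z: "z \<in> Y"
            obtain L where L: "(f has_derivative L) (at z)" "\<forall>c v. L (c *s v) = c * L v"
              using fa z unfolding holomorphic_n_def by blast
            have "((\<lambda>z. f z * c) has_derivative (\<lambda>v. L v * c)) (at z)"
              by (rule has_derivative_mult_left[OF L(1)])
            then have "(g has_derivative (\<lambda>v. L v * c)) (at z)"
              by (rule has_derivative_transform_within_open[OF _ Yopen z]) (simp add: g_def restrict0_def)
            moreover have "\<forall>a v. L (a *s v) * c = a * (L v * c)" using L(2) by simp
            ultimately show "\<exists>L. (g has_derivative L) (at z) \<and> (\<forall>c v. L (c *s v) = c * L v)" by blast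
          qed
          moreover have "bounded (g ` Y)"
          proof -
            obtain B where B: "\<forall>x\<in>f ` Y. norm x \<le> B" using fbd bounded_iff by blast
            have "\<forall>x\<in>g ` Y. norm x \<le> B * cmod c"
              using B by (auto simp: g_def restrict0_def norm_mult intro: mult_right_mono)
            then show ?thesis using bounded_iff by blast
          qed
          moreover have "sup_on Y g \<le> 1"
          proof (rule sup_on_least[OF Yne])
            fix z assume z: "z \<in> Y"
            have "cmod (f z) \<le> s" using sup_on_upper[OF fbd z] unfolding s_def .
            moreover have "cmod (g z) = cmod (f z) / s" using z spos
              by (simp add: g_def restrict0_def c_def norm_mult norm_inverse divide_inverse)
            ultimately show "cmod (g z) \<le> 1" using spos by (simp add: divide_le_eq)
          qed
          ultimately show ?thesis unfolding H_inf_def by simp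
        qed
        then have gS: "g \<in> closure S" using ball unfolding S_def by simp
        define Phi where "Phi = (\<lambda>q::complex ^ 'n \<Rightarrow> complex. \<lambda>x. q (w x) * h x)"
        have contPhi: "continuous_on UNIV Phi" unfolding Phi_def
          by (intro continuous_on_coordinatewise_then_product
                continuous_on_mult[OF continuous_on_product_coordinates continuous_on_const])
        have step: "Phi g \<in> {k\<in>F. N k \<le> C * N h + d}" if d: "d > 0" for d
        proof -
          have pos: "C * N h + d > 0" using C0le Nh d by (simp add: add_nonneg_pos)
          have cl: "closed (Phi -` {k\<in>F. N k \<le> C * N h + d})"
            by (rule closed_vimage[OF closed_ball_F[OF nfs reg pos] contPhi])
          have "S \<subseteq> Phi -` {k\<in>F. N k \<le> C * N h + d}"
          proof
            fix q assume "q \<in> S"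
            then obtain p where q: "q = restrict0 Y p" and p: "polynomial_fun p" "sup_on Y p < 1"
              unfolding S_def by blast
            have eqp: "Phi q = (\<lambda>x. (p \<circ> w) x * h x)"
            proof
              fix x show "Phi q x = (p \<circ> w) x * h x"
                using wY Fext[OF h, of x] by (cases "x \<in> X") (auto simp: Phi_def q restrict0_def)
            qed
            have pY: "bounded (p ` Y)" using pbd[OF p(1)] by (meson bounded_subset closure_subset image_mono)
            have clp: "closed {z. cmod (p z) \<le> 1}"
              by (rule closed_Collect_le) (use poly_cont[OF p(1)] in \<open>auto intro: continuous_intros\<close>)
            have "Y \<subseteq> {z. cmod (p z) \<le> 1}" using sup_on_upper[OF pY] p(2) by force
            then have cY1: "closure Y \<subseteq> {z. cmod (p z) \<le> 1}" using closure_minimal clp by blast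
            have sp: "sup_on (closure Y) p \<le> 1" by (rule sup_on_least[OF cYne]) (use cY1 in auto)
            have "N (Phi q) \<le> C * sup_on (closure Y) p * N h" using Pbound[OF p(1) h] eqp by simp
            also have "\<dots> \<le> C * 1 * N h" using sp C0le Nh by (intro mult_right_mono mult_left_mono) auto
            also have "\<dots> \<le> C * N h + d" using d by simp
            finally show "q \<in> Phi -` {k\<in>F. N k \<le> C * N h + d}" using Pbound[OF p(1) h] eqp by simp
          qed
          then have "closure S \<subseteq> Phi -` {k\<in>F. N k \<le> C * N h + d}" using closure_minimal cl by blast
          then show ?thesis using gS by blast
        qed
        have PgF: "Phi g \<in> F" using step[of 1] by simp
        have PgN: "N (Phi g) \<le> C * N h" by (rule field_le_epsilon) (use step in auto)
        have eqf: "(\<lambda>x. (f \<circ> w) x * h x) = (\<lambda>x. complex_of_real s * Phi g x)"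
        proof
          fix x show "(f \<circ> w) x * h x = complex_of_real s * Phi g x"
            using wY Fext[OF h, of x] spos
            by (cases "x \<in> X") (auto simp: Phi_def g_def restrict0_def c_def)
        qed
        have "(\<lambda>x. complex_of_real s * Phi g x) \<in> F" using F(4)[OF PgF] .
        moreover have "N (\<lambda>x. complex_of_real s * Phi g x) = s * N (Phi g)"
          using F(7)[OF PgF] spos by simp
        moreover have "s * N (Phi g) \<le> C * s * N h" using PgN spos by (simp add: mult_left_mono mult.assoc mult.left_commute)
        ultimately show ?thesis unfolding eqf by simp
      qed
    qed
    have "f \<circ> w \<in> Mult F N" unfolding Mult_def using key by blast
    moreover have "mult_norm F N (f \<circ> w) \<le> C * s"
      by (rule mult_norm_le) (use key C0le s0 in auto)
    ultimately show "(f \<circ> w) \<in> Mult F N \<and> mult_norm F N (f \<circ> w) \<le> C * sup_on Y f"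
      unfolding s_def by simp
  qed
  show ?thesis using part1 part2 by blast
qed

end
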